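(* Let $\lambda,\mu,\alpha>0$ and let $\xi(t)$, $t\ge 0$, be the Poisson process with uniform catastrophes with parameters $\lambda,\mu,\alpha$ (defined in the context). Let $\varphi:(0,\infty)\to(0,\infty)$ be a function with $\varphi(T)\to\infty$ as $T\to\infty$, such that $\lim_{T\to\infty}\varphi(T)/T=0$ and there exists $a\in(0,1)$ with $\lim_{T\to\infty}\varphi(T)/T^a=\infty$. Then the family of random variables $\xi_T(1):=\xi(T)/\varphi(T)$ satisfies the large deviation principle on $\mathbb{R}$ with normalizing function $\psi(T)=\varphi(T)$ and rate function $$ I_1(x)=\begin{cases}\infty, & x\in(-\infty,0),\\ x\ln\left(\frac{\lambda+\mu}{\lambda}\right), & x\in[0,\infty).\end{cases} $$
   Context: Poisson process with uniform catastrophes: let $\eta(n)$, $n\in\mathbb{Z}^+=\{0,1,2,\dots\}$, be a Markov chain on $\mathbb{Z}^+$ with $\eta(0)=0$ and transition probabilities $\mathbf{P}(\eta(n+1)=j\mid\eta(n)=i)=\frac{\lambda}{\lambda+\mu}$ if $j=i+1$ (and $i\ge 1$), $=\frac{\mu}{i(\lambda+\mu)}$ if $0\le j<i$, $i\neq0$, and $=1$ if $i=0$, $j=1$. Let $\nu(t)$, $t\ge0$, be a Poisson process with rate $\alpha$, independent of $\eta$. Set $\xi(t):=\eta(\nu(t))$. Large deviation principle (LDP): a family of real random variables $X_T$ satisfies the LDP with rate function $I:\mathbb{R}\to[0,\infty]$ and normalizing function $\psi(T)\to\infty$ if for every $c\ge0$ the set $\{x: I(x)\le c\}$ is compact, and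 for every Borel set $B\subseteq\mathbb{R}$, $\limsup_{T\to\infty}\frac{1}{\psi(T)}\ln\mathbf{P}(X_T\in B)\le -I([B])$ and $\liminf_{T\to\infty}\frac{1}{\psi(T)}\ln\mathbf{P}(X_T\in B)\ge -I((B))$, where $[B]$ and $(B)$ denote closure and interior, $I(B)=\inf_{x\in B}I(x)$ and $I(\emptyset)=\infty$. *)

theory Defs
  imports "HOL-Analysis.Analysis"
begin

text \<open>Transition probabilities of the embedded Markov chain eta on the nonnegative integers.\<close>
definition eta_trans :: "real \<Rightarrow> real \<Rightarrow> nat \<Rightarrow> nat \<Rightarrow> real" where
  "eta_trans lam mu i j =
     (if i = 0 then (if j = 1 then 1 else 0)
      else if j = i + 1 then lam / (lam + mu)
      else if j < i then mu / (real i * (lam + mu))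
      else 0)"

text \<open>Law of eta(n) started at eta(0) = 0 (Chapman-Kolmogorov; eta(n) \<le> n).\<close>
fun eta_dist :: "real \<Rightarrow> real \<Rightarrow> nat \<Rightarrow> nat \<Rightarrow> real" where
  "eta_dist lam mu 0 j = (if j = 0 then 1 else 0)"
| "eta_dist lam mu (Suc n) j = (\<Sum>i\<le>n. eta_dist lam mu n i * eta_trans lam mu i j)"

definition poisson_prob :: "real \<Rightarrow> real \<Rightarrow> nat \<Rightarrow> real" where
  "poisson_prob alpha t n = exp (- alpha * t) * (alpha * t) ^ n / fact n"

text \<open>Law of xi(t) = eta(nu(t)), eta and nu independent.\<close>
definition xi_prob :: "real \<Rightarrow> real \<Rightarrow> real \<Rightarrow> real \<Rightarrow> nat \<Rightarrow> real" where
  "xi_prob lam mu alpha t j = (\<Sum>n. poisson_prob alpha t n * eta_dist lam mu n j)"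

definition xi_scaled_prob ::
    "real \<Rightarrow> real \<Rightarrow> real \<Rightarrow> (real \<Rightarrow> real) \<Rightarrow> real \<Rightarrow> real set \<Rightarrow> real" where
  "xi_scaled_prob lam mu alpha phi T B =
     (\<Sum>j. if real j / phi T \<in> B then xi_prob lam mu alpha T j else 0)"

definition eln :: "real \<Rightarrow> ereal" where
  "eln p = (if p > 0 then ereal (ln p) else - \<infinity>)"

definition rate_set :: "(real \<Rightarrow> ereal) \<Rightarrow> real set \<Rightarrow> ereal" where
  "rate_set I B = (INF x\<in>B. I x)"

text \<open>Large deviation principle for a family X_T, given through
  P T B = P(X_T \<in> B), with rate function I and normalizing function psi.\<close>
definition LDP :: "(real \<Rightarrow> real set \<Rightarrow> real) \<Rightarrow> (real \<Rightarrow> ereal) \<Rightarrow> (real \<Rightarrow> real) \<Rightarrow> bool" where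
  "LDP P I psi \<longleftrightarrow>
     (\<forall>x. I x \<ge> 0) \<and>
     (\<forall>c::real. c \<ge> 0 \<longrightarrow> compact {x. I x \<le> ereal c}) \<and>
     (\<forall>B \<in> sets borel.
        Limsup at_top (\<lambda>T. eln (P T B) / ereal (psi T)) \<le> - rate_set I (closure B) \<and>
        Liminf at_top (\<lambda>T. eln (P T B) / ereal (psi T)) \<ge> - rate_set I (interior B))"

definition I1 :: "real \<Rightarrow> real \<Rightarrow> real \<Rightarrow> ereal" where
  "I1 lam mu x = (if x < 0 then \<infinity> else ereal (x * ln ((lam + mu) / lam)))"

end

theory Submission
  imports Defs
begin


lemma tr_nonneg: "lam > 0 \<Longrightarrow> mu > 0 \<Longrightarrow> eta_trans lam mu i j \<ge> 0"
  by (simp add: eta_trans_def)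

lemma tr_zero: "j > i + 1 \<Longrightarrow> eta_trans lam mu i j = 0"
  by (simp add: eta_trans_def)

lemma tr_weighted:
  assumes "i + 1 \<le> L"
  shows "(\<Sum>j\<le>L. eta_trans lam mu i j * w j) =
    (if i = 0 then w 1 else lam/(lam+mu) * w (i+1) + mu/(real i*(lam+mu)) * (\<Sum>j<i. w j))"
proof (cases "i = 0")
  case True
  have "(\<Sum>j\<le>L. eta_trans lam mu i j * w j) = (\<Sum>j\<le>L. if j = 1 then w j else 0)"
    using True by (intro sum.cong) (auto simp: eta_trans_def)
  also have "\<dots> = w 1" using assms True by (simp add: sum.delta)
  finally show ?thesis using True by simp
next
  case False
  have "(\<Sum>j\<le>L. eta_trans lam mu i j * w j) =
     (\<Sum>j\<le>L. (if j = i+1 then lam/(lam+mu) * w j else 0) + (if j < i then mu/(real i*(lam+mu)) * w j else 0))"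
    using False by (intro sum.cong) (auto simp: eta_trans_def)
  also have "\<dots> = (\<Sum>j\<le>L. (if j = i+1 then lam/(lam+mu) * w j else 0)) + (\<Sum>j\<le>L. (if j < i then mu/(real i*(lam+mu)) * w j else 0))"
    by (simp add: sum.distrib)
  also have "(\<Sum>j\<le>L. (if j = i+1 then lam/(lam+mu) * w j else 0)) = lam/(lam+mu) * w (i+1)"
    using assms by (simp add: sum.delta)
  also have "(\<Sum>j\<le>L. (if j < i then mu/(real i*(lam+mu)) * w j else 0)) = (\<Sum>j\<in>{j\<in>{..L}. j < i}. mu/(real i*(lam+mu)) * w j)"
    by (rule sum.inter_filter[symmetric]) simp
  also have "{j\<in>{..L}. j < i} = {..<i}" using assms by auto
  also have "(\<Sum>j\<in>{..<i}. mu/(real i*(lam+mu)) * w j) = mu/(real i*(lam+mu)) * (\<Sum>j<i. w j)"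
    by (simp add: sum_distrib_left)
  finally show ?thesis using False by simp
qed

lemma tr_rowsum:
  assumes "lam > 0" "mu > 0" "i + 1 \<le> L"
  shows "(\<Sum>j\<le>L. eta_trans lam mu i j) = 1"
proof -
  have "(\<Sum>j\<le>L. eta_trans lam mu i j) = (\<Sum>j\<le>L. eta_trans lam mu i j * 1)" by simp
  also have "\<dots> = 1"
  proof (cases "i = 0")
    case False
    then have "real i * (lam + mu) \<noteq> 0" "lam + mu \<noteq> 0" using assms by auto
    have "mu/(real i*(lam+mu)) * (\<Sum>j<i. 1) = mu/(lam+mu)" using False by simp
    moreover have "lam/(lam+mu) + mu/(lam+mu) = 1" using assms by (simp add: add_divide_distrib[symmetric])
    ultimately show ?thesis unfolding tr_weighted[OF assms(3)] using False by simp
  qed (subst tr_weighted[OF assms(3)], simp)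
  finally show ?thesis .
qed

lemma eta_nonneg: "lam > 0 \<Longrightarrow> mu > 0 \<Longrightarrow> eta_dist lam mu n j \<ge> 0"
  by (induction n arbitrary: j) (auto intro!: sum_nonneg mult_nonneg_nonneg tr_nonneg)

lemma eta_zero: "j > n \<Longrightarrow> eta_dist lam mu n j = 0"
  by (induction n arbitrary: j) (auto intro!: sum.neutral simp: tr_zero)

lemma eta_sum:
  assumes "lam > 0" "mu > 0"
  shows "(\<Sum>j\<le>n. eta_dist lam mu n j) = 1"
proof (induction n)
  case 0
  then show ?case by simp
next
  case (Suc n)
  have "(\<Sum>j\<le>Suc n. eta_dist lam mu (Suc n) j) = (\<Sum>j\<le>Suc n. \<Sum>i\<le>n. eta_dist lam mu n i * eta_trans lam mu i j)"
    by simp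
  also have "\<dots> = (\<Sum>i\<le>n. eta_dist lam mu n i * (\<Sum>j\<le>Suc n. eta_trans lam mu i j))"
    unfolding sum_distrib_left by (rule sum.swap)
  also have "\<dots> = (\<Sum>i\<le>n. eta_dist lam mu n i)"
    using assms by (intro sum.cong refl, subst tr_rowsum) auto
  finally show ?case using Suc by simp
qed


declare eta_dist.simps(2)[simp del]

lemma eta_step_ge:
  assumes "lam > 0" "mu > 0" "i \<le> m"
  shows "eta_dist lam mu (Suc m) j \<ge> eta_dist lam mu m i * eta_trans lam mu i j"
proof -
  have "eta_dist lam mu (Suc m) j = (\<Sum>i'\<le>m. eta_dist lam mu m i' * eta_trans lam mu i' j)" by (simp add: eta_dist.simps(2))
  also have "\<dots> \<ge> eta_dist lam mu m i * eta_trans lam mu i j"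
    using assms by (intro member_le_sum) (auto intro!: mult_nonneg_nonneg eta_nonneg tr_nonneg)
  finally show ?thesis .
qed

lemma eta_up:
  assumes "lam > 0" "mu > 0" "j \<ge> 1"
  shows "eta_dist lam mu (Suc m) (Suc j) \<ge> lam/(lam+mu) * eta_dist lam mu m j"
proof (cases "j \<le> m")
  case True
  have "eta_trans lam mu j (Suc j) = lam/(lam+mu)" using assms by (simp add: eta_trans_def)
  then show ?thesis using eta_step_ge[OF assms(1,2) True, of "Suc j"] by (simp add: mult.commute)
next
  case False
  then show ?thesis using eta_zero[of m j] eta_nonneg[OF assms(1,2)] by simp
qed

lemma eta_up1:
  assumes "lam > 0" "mu > 0"
  shows "eta_dist lam mu (Suc m) 1 \<ge> eta_dist lam mu m 0"
  using eta_step_ge[OF assms, of 0 m 1] by (simp add: eta_trans_def)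

lemma eta_upk:
  assumes "lam > 0" "mu > 0"
  shows "eta_dist lam mu (Suc m + i) (Suc i) \<ge> (lam/(lam+mu))^i * eta_dist lam mu m 0"
proof (induction i)
  case 0
  then show ?case using eta_up1[OF assms] by simp
next
  case (Suc i)
  have "eta_dist lam mu (Suc (Suc m + i)) (Suc (Suc i)) \<ge> lam/(lam+mu) * eta_dist lam mu (Suc m + i) (Suc i)"
    by (rule eta_up[OF assms]) simp
  moreover have "lam/(lam+mu) * eta_dist lam mu (Suc m + i) (Suc i) \<ge> lam/(lam+mu) * ((lam/(lam+mu))^i * eta_dist lam mu m 0)"
    using Suc assms by (intro mult_left_mono) auto
  ultimately show ?case by simp
qed

lemma eta_zero_step:
  assumes "lam > 0" "mu > 0" "m \<ge> 1"
  shows "eta_dist lam mu (Suc m) 0 \<ge> mu/(lam+mu) / real m * (1 - eta_dist lam mu m 0)"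
proof -
  have "eta_dist lam mu (Suc m) 0 = (\<Sum>i\<le>m. eta_dist lam mu m i * eta_trans lam mu i 0)" by (simp add: eta_dist.simps(2))
  also have "\<dots> = (\<Sum>i\<in>{1..m}. eta_dist lam mu m i * (mu/(lam+mu) / real i))"
  proof -
    have "{..m} = insert 0 {1..m}" by auto
    then have "(\<Sum>i\<le>m. eta_dist lam mu m i * eta_trans lam mu i 0) = (\<Sum>i\<in>{1..m}. eta_dist lam mu m i * eta_trans lam mu i 0)"
      by (simp add: eta_trans_def)
    also have "\<dots> = (\<Sum>i\<in>{1..m}. eta_dist lam mu m i * (mu/(lam+mu) / real i))"
      by (intro sum.cong refl) (auto simp: eta_trans_def)
    finally show ?thesis .
  qed
  also have "\<dots> \<ge> (\<Sum>i\<in>{1..m}. eta_dist lam mu m i * (mu/(lam+mu) / real m))"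
    using assms by (intro sum_mono mult_left_mono eta_nonneg divide_left_mono) auto
  also have "(\<Sum>i\<in>{1..m}. eta_dist lam mu m i * (mu/(lam+mu) / real m)) = mu/(lam+mu) / real m * (\<Sum>i\<in>{1..m}. eta_dist lam mu m i)"
    by (simp add: sum_distrib_left mult.commute)
  also have "(\<Sum>i\<in>{1..m}. eta_dist lam mu m i) = 1 - eta_dist lam mu m 0"
  proof -
    have "{..m} = insert 0 {1..m}" by auto
    then have "(\<Sum>i\<le>m. eta_dist lam mu m i) = eta_dist lam mu m 0 + (\<Sum>i\<in>{1..m}. eta_dist lam mu m i)" by simp
    then show ?thesis using eta_sum[OF assms(1,2), of m] by simp
  qed
  finally show ?thesis .
qed

lemma eta_zero_max:
  assumes "lam > 0" "mu > 0" "m \<ge> 1"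
  shows "eta_dist lam mu m 0 \<ge> mu/(lam+mu) / (2*real m) \<or> eta_dist lam mu (Suc m) 0 \<ge> mu/(lam+mu) / (2*real m)"
proof (cases "eta_dist lam mu m 0 \<ge> 1/2")
  case True
  have "mu/(lam+mu) \<le> 1" using assms by simp
  then have "mu/(lam+mu) / (2*real m) \<le> 1 / (2 * real m)" using assms by (intro divide_right_mono) auto
  also have "\<dots> \<le> 1/2" using assms by (simp add: field_simps)
  finally have "mu/(lam+mu) / (2*real m) \<le> eta_dist lam mu m 0" using True by linarith
  then show ?thesis by blast
next
  case False
  have "mu/(lam+mu) / (2*real m) = mu/(lam+mu) / real m * (1/2)" by simp
  also have "\<dots> \<le> mu/(lam+mu) / real m * (1 - eta_dist lam mu m 0)"
    using False assms by (intro mult_left_mono) auto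
  finally show ?thesis using eta_zero_step[OF assms] by auto
qed

lemma eta_pair_lower:
  assumes "lam > 0" "mu > 0" "k \<ge> 1" "n \<ge> k + 2"
  shows "eta_dist lam mu n k + eta_dist lam mu n (Suc k) \<ge> (lam/(lam+mu))^k * (mu/(lam+mu)) / (2 * real n)"
proof -
  define p where "p = lam/(lam+mu)"
  define q where "q = mu/(lam+mu)"
  have p01: "0 < p" "p \<le> 1" using assms by (auto simp: p_def)
  have q0: "q > 0" using assms by (simp add: q_def)
  define m where "m = n - k - 1"
  have m1: "m \<ge> 1" and mle: "real m \<le> real n" using assms by (auto simp: m_def)
  have nn1: "eta_dist lam mu n k \<ge> 0" "eta_dist lam mu n (Suc k) \<ge> 0" using assms eta_nonneg by auto
  have key: "p^k * q / (2 * real n) \<le> p^k * (q / (2 * real m))"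
    using m1 mle p01 q0 by (simp add: divide_left_mono frac_le)
  from eta_zero_max[OF assms(1,2) m1] show ?thesis
  proof
    assume h: "eta_dist lam mu m 0 \<ge> mu/(lam+mu) / (2*real m)"
    have "n = Suc m + k" using assms by (simp add: m_def)
    then have "eta_dist lam mu n (Suc k) \<ge> p^k * eta_dist lam mu m 0"
      using eta_upk[OF assms(1,2), where m=m and i=k] by (simp add: p_def)
    moreover have "p^k * eta_dist lam mu m 0 \<ge> p^k * (q / (2*real m))"
      using h p01 by (intro mult_left_mono) (auto simp: q_def)
    ultimately show ?thesis using key nn1 by (simp add: p_def q_def)
  next
    assume h: "eta_dist lam mu (Suc m) 0 \<ge> mu/(lam+mu) / (2*real m)"
    have "n = Suc (Suc m) + (k - 1)" "k = Suc (k - 1)" using assms by (auto simp: m_def)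
    then have "eta_dist lam mu n k \<ge> p^(k-1) * eta_dist lam mu (Suc m) 0"
      using eta_upk[OF assms(1,2), where m="Suc m" and i="k - 1"] by (simp add: p_def)
    moreover have "p^(k-1) * eta_dist lam mu (Suc m) 0 \<ge> p^(k-1) * (q / (2*real m))"
      using h p01 by (intro mult_left_mono) (auto simp: q_def)
    moreover have "p^k * (q / (2 * real m)) \<le> p^(k-1) * (q / (2*real m))"
      using p01 q0 m1 by (intro mult_right_mono power_decreasing) auto
    ultimately show ?thesis using key nn1 by (simp add: p_def q_def)
  qed
qed


lemma drift:
  assumes "lam > 0" "mu > 0" "r > 1" "lam/(lam+mu)*r < 1"
  shows "\<exists>\<theta> b. 0 \<le> \<theta> \<and> \<theta> < 1 \<and> 0 \<le> b \<and>
     (\<forall>i L. i + 1 \<le> L \<longrightarrow> (\<Sum>j\<le>L. eta_trans lam mu i j * r^j) \<le> \<theta> * r^i + b)"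
proof -
  define p where "p = lam/(lam+mu)"
  define q where "q = mu/(lam+mu)"
  define c where "c = p * r"
  have p0: "p > 0" and q0: "q > 0" using assms by (auto simp: p_def q_def)
  have c1: "c < 1" "c > 0" using assms p0 by (auto simp: c_def p_def)
  define i0 :: nat where "i0 = nat \<lceil>2*q/((1-c)*(r-1))\<rceil> + 1"
  define b1 where "b1 = r^i0 * (p*r + q/(r-1))"
  define \<theta> where "\<theta> = (1+c)/2"
  define b where "b = r + b1"
  have b1_0: "b1 \<ge> 0" using assms p0 q0 by (simp add: b1_def)
  have geo: "(\<Sum>j<i. r^j) \<le> r^i/(r-1)" for i :: nat
  proof -
    have "(\<Sum>j<i. r^j) = (r^i - 1)/(r-1)" using assms by (simp add: geometric_sum)
    also have "\<dots> \<le> r^i/(r-1)" using assms by (simp add: divide_right_mono)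
    finally show ?thesis .
  qed
  have main: "(\<Sum>j\<le>L. eta_trans lam mu i j * r^j) \<le> \<theta> * r^i + b" if "i + 1 \<le> L" for i L
  proof (cases "i = 0")
    case True
    then show ?thesis unfolding tr_weighted[OF that] using b1_0 c1 by (simp add: \<theta>_def b_def)
  next
    case False
    have eq: "(\<Sum>j\<le>L. eta_trans lam mu i j * r^j) = p * r^(i+1) + q / real i * (\<Sum>j<i. r^j)"
      unfolding tr_weighted[OF that] using False by (simp add: p_def q_def)
    have le1: "q / real i * (\<Sum>j<i. r^j) \<le> q / real i * (r^i/(r-1))"
      using geo q0 by (intro mult_left_mono) auto
    show ?thesis
    proof (cases "i \<ge> i0")
      case True
      have "real i \<ge> 2*q/((1-c)*(r-1))"
      proof -
        have "2*q/((1-c)*(r-1)) \<le> real (nat \<lceil>2*q/((1-c)*(r-1))\<rceil>)" by (rule real_nat_ceiling_ge)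
        also have "\<dots> \<le> real i" using True unfolding i0_def of_nat_le_iff by linarith
        finally show ?thesis .
      qed
      moreover have dpos: "(1-c)*(r-1) > 0" using c1 assms by simp
      ultimately have "2*q \<le> real i * ((1-c)*(r-1))" by (simp add: pos_divide_le_eq)
      then have "q/(real i * (r-1)) \<le> (1-c)/2"
        using c1 assms q0 False by (simp add: divide_le_eq mult_ac)
      then have "q/(real i * (r-1)) * r^i \<le> (1-c)/2 * r^i"
        using assms by (intro mult_right_mono) auto
      moreover have "q / real i * (r^i/(r-1)) = q/(real i * (r-1)) * r^i" by simp
      ultimately have "q / real i * (r^i/(r-1)) \<le> (1-c)/2 * r^i" by simp
      moreover have "p * r^(i+1) = c * r^i" by (simp add: c_def)
      moreover have "\<theta> * r^i = c*r^i + (1-c)/2*r^i" by (simp add: \<theta>_def field_simps)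
      ultimately have "p * r^(i+1) + q / real i * (\<Sum>j<i. r^j) \<le> \<theta> * r^i"
        using le1 by linarith
      then show ?thesis using eq b1_0 assms by (simp add: b_def)
    next
      case False
      have ri: "r^i \<le> r^i0" using False assms by (intro power_increasing) auto
      have "q / real i * (r^i/(r-1)) = (q * (r^i/(r-1))) / real i" by simp
      also have "\<dots> \<le> (q * (r^i/(r-1))) / 1"
        using \<open>i \<noteq> 0\<close> q0 assms by (intro divide_left_mono) auto
      finally have "q / real i * (r^i/(r-1)) \<le> q * (r^i/(r-1))" by simp
      also have "\<dots> \<le> q * (r^i0/(r-1))"
        using ri q0 assms by (intro mult_left_mono divide_right_mono) auto
      moreover have "p*r^(i+1) \<le> p*r*r^i0"
        using ri p0 assms by (simp add: mult_left_mono mult.assoc)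
      ultimately have "p * r^(i+1) + q / real i * (\<Sum>j<i. r^j) \<le> p*r*r^i0 + q * (r^i0/(r-1))"
        using le1 by linarith
      also have "\<dots> = b1" by (simp add: b1_def field_simps)
      moreover have "\<theta> * r^i \<ge> 0" using c1 assms by (simp add: \<theta>_def)
      ultimately show ?thesis using eq assms by (simp add: b_def)
    qed
  qed
  show ?thesis
    by (rule exI[of _ \<theta>], rule exI[of _ b]) (use main c1 b1_0 assms in \<open>auto simp: \<theta>_def b_def\<close>)
qed

lemma eta_moment:
  assumes "lam > 0" "mu > 0" "r > 1" "lam/(lam+mu)*r < 1"
  shows "\<exists>M>0. \<forall>n. (\<Sum>j\<le>n. eta_dist lam mu n j * r^j) \<le> M"
proof -
  obtain \<theta> b where tb: "0 \<le> \<theta>" "\<theta> < 1" "0 \<le> b"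
    and dr: "\<And>i L. i + 1 \<le> L \<Longrightarrow> (\<Sum>j\<le>L. eta_trans lam mu i j * r^j) \<le> \<theta> * r^i + b"
    using drift[OF assms] by blast
  define M where "M = max 1 (b/(1-\<theta>))"
  have M1: "M \<ge> 1" by (simp add: M_def)
  have bM: "b \<le> (1-\<theta>) * M"
  proof -
    have "b/(1-\<theta>) \<le> M" by (simp add: M_def)
    then show ?thesis using tb by (simp add: field_simps)
  qed
  have "(\<Sum>j\<le>n. eta_dist lam mu n j * r^j) \<le> M" for n
  proof (induction n)
    case 0
    then show ?case using M1 by simp
  next
    case (Suc n)
    have "(\<Sum>j\<le>Suc n. eta_dist lam mu (Suc n) j * r^j) =
        (\<Sum>j\<le>Suc n. \<Sum>i\<le>n. eta_dist lam mu n i * (eta_trans lam mu i j * r^j))"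
      by (simp add: eta_dist.simps(2) sum_distrib_right mult.assoc)
    also have "\<dots> = (\<Sum>i\<le>n. eta_dist lam mu n i * (\<Sum>j\<le>Suc n. eta_trans lam mu i j * r^j))"
      unfolding sum_distrib_left by (rule sum.swap)
    also have "\<dots> \<le> (\<Sum>i\<le>n. eta_dist lam mu n i * (\<theta> * r^i + b))"
      using assms by (intro sum_mono mult_left_mono eta_nonneg dr) auto
    also have "\<dots> = \<theta> * (\<Sum>i\<le>n. eta_dist lam mu n i * r^i) + b * (\<Sum>i\<le>n. eta_dist lam mu n i)"
      by (simp add: sum_distrib_left sum.distrib algebra_simps)
    also have "\<dots> = \<theta> * (\<Sum>i\<le>n. eta_dist lam mu n i * r^i) + b"
      using eta_sum[OF assms(1,2)] by simp
    also have "\<dots> \<le> \<theta> * M + b" using Suc tb by (simp add: mult_left_mono)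
    also have "\<dots> \<le> M" using bM by (simp add: algebra_simps)
    finally show ?case .
  qed
  then show ?thesis using M1 by (intro exI[of _ M]) auto
qed


lemma poisson_nonneg: "alpha \<ge> 0 \<Longrightarrow> t \<ge> 0 \<Longrightarrow> poisson_prob alpha t n \<ge> 0"
  by (simp add: poisson_prob_def)

lemma poisson_weighted_sums:
  "(\<lambda>n. poisson_prob alpha t n * exp (a + s * real n)) sums exp (a - alpha*t + alpha*t*exp s)"
proof -
  have "(\<lambda>n. (alpha*t*exp s)^n /\<^sub>R fact n) sums exp (alpha*t*exp s)" by (rule exp_converges)
  then have "(\<lambda>n. exp (a - alpha*t) * ((alpha*t*exp s)^n /\<^sub>R fact n)) sums (exp (a - alpha*t) * exp (alpha*t*exp s))"
    by (rule sums_mult)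
  moreover have "exp (a - alpha*t) * ((alpha*t*exp s)^n /\<^sub>R fact n) = poisson_prob alpha t n * exp (a + s * real n)" for n
  proof -
    have "exp (a + s * real n) = exp a * exp s ^ n"
      by (simp add: exp_add exp_of_nat_mult[symmetric] mult.commute)
    moreover have "exp (a - alpha*t) = exp a * exp (- alpha * t)" by (simp add: exp_diff exp_minus field_simps)
    ultimately show ?thesis by (simp add: poisson_prob_def power_mult_distrib field_simps)
  qed
  moreover have "exp (a - alpha*t) * exp (alpha*t*exp s) = exp (a - alpha*t + alpha*t*exp s)" by (simp add: exp_add)
  ultimately show ?thesis by simp
qed

lemma poisson_sums: "(\<lambda>n. poisson_prob alpha t n) sums 1"
  using poisson_weighted_sums[of alpha t 0 0] by simp

lemma poisson_summable: "summable (\<lambda>n. poisson_prob alpha t n)"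
  using poisson_sums by (rule sums_summable)

lemma eta_le1: assumes "lam > 0" "mu > 0" shows "eta_dist lam mu n j \<le> 1"
proof (cases "j \<le> n")
  case True
  have "eta_dist lam mu n j \<le> (\<Sum>j\<le>n. eta_dist lam mu n j)"
    using True assms by (intro member_le_sum eta_nonneg) auto
  then show ?thesis using eta_sum[OF assms] by simp
qed (simp add: eta_zero)

lemma xi_term_summable:
  assumes "lam > 0" "mu > 0" "alpha \<ge> 0" "t \<ge> 0"
  shows "summable (\<lambda>n. poisson_prob alpha t n * eta_dist lam mu n j)"
proof (rule summable_comparison_test[OF _ poisson_summable[of alpha t]])
  have "norm (poisson_prob alpha t n * eta_dist lam mu n j) \<le> poisson_prob alpha t n" for n
  proof -
    have a: "poisson_prob alpha t n \<ge> 0" "eta_dist lam mu n j \<ge> 0" "eta_dist lam mu n j \<le> 1"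
      using assms by (auto intro: poisson_nonneg eta_nonneg eta_le1)
    then have "poisson_prob alpha t n * eta_dist lam mu n j \<le> poisson_prob alpha t n * 1"
      by (intro mult_left_mono) auto
    then show ?thesis using a by simp
  qed
  then show "\<exists>N. \<forall>n\<ge>N. norm (poisson_prob alpha t n * eta_dist lam mu n j) \<le> poisson_prob alpha t n" by blast
qed

lemma xi_nonneg:
  assumes "lam > 0" "mu > 0" "alpha \<ge> 0" "t \<ge> 0"
  shows "xi_prob lam mu alpha t j \<ge> 0"
  unfolding xi_prob_def using assms
  by (intro suminf_nonneg xi_term_summable) (auto intro!: mult_nonneg_nonneg eta_nonneg poisson_nonneg)

lemma xi_weighted_partial:
  assumes "lam > 0" "mu > 0" "alpha \<ge> 0" "t \<ge> 0"
    and w: "\<And>j. w j \<ge> 0" and M: "\<And>n. (\<Sum>j\<le>n. eta_dist lam mu n j * w j) \<le> M"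
  shows "(\<Sum>j<J. w j * xi_prob lam mu alpha t j) \<le> M"
proof -
  have sm: "summable (\<lambda>n. w j * (poisson_prob alpha t n * eta_dist lam mu n j))" for j
    using xi_term_summable[OF assms(1-4)] by (rule summable_mult)
  have "(\<Sum>j<J. w j * xi_prob lam mu alpha t j) = (\<Sum>j<J. \<Sum>n. w j * (poisson_prob alpha t n * eta_dist lam mu n j))"
    unfolding xi_prob_def
    by (intro sum.cong refl suminf_mult[symmetric] xi_term_summable[OF assms(1-4)])
  also have "\<dots> = (\<Sum>n. \<Sum>j<J. w j * (poisson_prob alpha t n * eta_dist lam mu n j))"
    by (rule suminf_sum[symmetric]) (use sm in auto)
  also have "\<dots> \<le> (\<Sum>n. poisson_prob alpha t n * M)"
  proof (rule suminf_le)
    fix n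
    have "(\<Sum>j<J. eta_dist lam mu n j * w j) \<le> (\<Sum>j\<in>{..<J} \<union> {..n}. eta_dist lam mu n j * w j)"
      using assms by (intro sum_mono2) (auto intro!: mult_nonneg_nonneg eta_nonneg)
    also have "\<dots> = (\<Sum>j\<le>n. eta_dist lam mu n j * w j)"
      by (rule sum.mono_neutral_right) (auto simp: eta_zero)
    finally have "(\<Sum>j<J. eta_dist lam mu n j * w j) \<le> M" using M[of n] by linarith
    then have "poisson_prob alpha t n * (\<Sum>j<J. eta_dist lam mu n j * w j) \<le> poisson_prob alpha t n * M"
      using assms by (intro mult_left_mono poisson_nonneg) auto
    then show "(\<Sum>j<J. w j * (poisson_prob alpha t n * eta_dist lam mu n j)) \<le> poisson_prob alpha t n * M"
      by (simp add: sum_distrib_left mult_ac)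
  next
    show "summable (\<lambda>n. \<Sum>j<J. w j * (poisson_prob alpha t n * eta_dist lam mu n j))"
      using sm by (rule summable_sum)
    show "summable (\<lambda>n. poisson_prob alpha t n * M)"
      using poisson_summable by (rule summable_mult2)
  qed
  also have "\<dots> = M" using sums_unique[OF poisson_sums] suminf_mult2[OF poisson_summable, of alpha t M]
    by simp
  finally show ?thesis .
qed

lemma xi_weighted_summable:
  assumes "lam > 0" "mu > 0" "alpha \<ge> 0" "t \<ge> 0"
    and w: "\<And>j. w j \<ge> 0" and M: "\<And>n. (\<Sum>j\<le>n. eta_dist lam mu n j * w j) \<le> M"
  shows "summable (\<lambda>j. w j * xi_prob lam mu alpha t j)"
    and "(\<Sum>j. w j * xi_prob lam mu alpha t j) \<le> M"
proof -
  have nn: "\<And>j. w j * xi_prob lam mu alpha t j \<ge> 0" using assms xi_nonneg by simp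
  show s: "summable (\<lambda>j. w j * xi_prob lam mu alpha t j)"
    by (rule summableI_nonneg_bounded[of _ M]) (use nn xi_weighted_partial[OF assms] in auto)
  show "(\<Sum>j. w j * xi_prob lam mu alpha t j) \<le> M"
    by (rule suminf_le_const[OF s]) (use xi_weighted_partial[OF assms] in auto)
qed

lemma xi_summable:
  assumes "lam > 0" "mu > 0" "alpha \<ge> 0" "t \<ge> 0"
  shows "summable (\<lambda>j. xi_prob lam mu alpha t j)"
  using xi_weighted_summable(1)[OF assms, of "\<lambda>_. 1" 1] eta_sum[OF assms(1,2)] by simp

lemma scaled_summable:
  assumes "lam > 0" "mu > 0" "alpha \<ge> 0" "t \<ge> 0"
  shows "summable (\<lambda>j. if real j / phi t \<in> B then xi_prob lam mu alpha t j else 0)"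
  by (rule summable_comparison_test[OF _ xi_summable[OF assms]])
     (use xi_nonneg[OF assms] in auto)

lemma scaled_nonneg:
  assumes "lam > 0" "mu > 0" "alpha \<ge> 0" "t \<ge> 0"
  shows "xi_scaled_prob lam mu alpha phi t B \<ge> 0"
  unfolding xi_scaled_prob_def
  by (intro suminf_nonneg scaled_summable[OF assms]) (use xi_nonneg[OF assms] in auto)

lemma scaled_empty:
  assumes "\<And>j. real j / phi t \<notin> B"
  shows "xi_scaled_prob lam mu alpha phi t B = 0"
  unfolding xi_scaled_prob_def using assms by simp

lemma scaled_upper:
  assumes "lam > 0" "mu > 0" "alpha \<ge> 0" "t \<ge> 0" "r \<ge> 1"
    and M: "\<And>n. (\<Sum>j\<le>n. eta_dist lam mu n j * r^j) \<le> M"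
    and B: "\<And>j. real j / phi t \<in> B \<Longrightarrow> real j \<ge> z"
  shows "xi_scaled_prob lam mu alpha phi t B \<le> r powr (-z) * M"
proof -
  have s: "summable (\<lambda>j. r^j * xi_prob lam mu alpha t j)"
    and le: "(\<Sum>j. r^j * xi_prob lam mu alpha t j) \<le> M"
    using xi_weighted_summable[OF assms(1-4), of "\<lambda>j. r^j" M] M assms(5) by auto
  have "xi_scaled_prob lam mu alpha phi t B \<le> (\<Sum>j. r powr (-z) * (r^j * xi_prob lam mu alpha t j))"
    unfolding xi_scaled_prob_def
  proof (rule suminf_le)
    fix j
    show "(if real j / phi t \<in> B then xi_prob lam mu alpha t j else 0) \<le> r powr (-z) * (r^j * xi_prob lam mu alpha t j)"
    proof (cases "real j / phi t \<in> B")
      case True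
      have "1 \<le> r powr (-z) * r^j"
      proof -
        have "r^j = r powr (real j)" using assms(5) by (simp add: powr_realpow)
        then have "r powr (-z) * r^j = r powr (real j - z)" using assms(5) by (simp add: powr_diff powr_minus divide_inverse)
        also have "\<dots> \<ge> 1" using B[OF True] assms(5) by (simp add: ge_one_powr_ge_zero)
        finally show ?thesis .
      qed
      then have "1 * xi_prob lam mu alpha t j \<le> (r powr (-z) * r^j) * xi_prob lam mu alpha t j"
        using xi_nonneg[OF assms(1-4)] by (intro mult_right_mono) auto
      then show ?thesis using True by (simp add: mult_ac)
    next
      case False
      then show ?thesis using xi_nonneg[OF assms(1-4)] assms(5) by simp
    qed
  qed (use scaled_summable[OF assms(1-4)] summable_mult[OF s] in auto)
  also have "\<dots> = r powr (-z) * (\<Sum>j. r^j * xi_prob lam mu alpha t j)"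
    by (rule suminf_mult[OF s])
  also have "\<dots> \<le> r powr (-z) * M" using le by (intro mult_left_mono) auto
  finally show ?thesis .
qed

lemma scaled_lower:
  assumes "lam > 0" "mu > 0" "alpha \<ge> 0" "t \<ge> 0"
    and "real k / phi t \<in> B" "real (Suc k) / phi t \<in> B"
  shows "xi_scaled_prob lam mu alpha phi t B \<ge> xi_prob lam mu alpha t k + xi_prob lam mu alpha t (Suc k)"
proof -
  have "(\<Sum>j\<in>{k, Suc k}. if real j / phi t \<in> B then xi_prob lam mu alpha t j else 0) \<le> xi_scaled_prob lam mu alpha phi t B"
    unfolding xi_scaled_prob_def
    by (rule sum_le_suminf[OF scaled_summable[OF assms(1-4)]]) (use xi_nonneg[OF assms(1-4)] in auto)
  then show ?thesis using assms by simp
qed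


lemma exp_m1_le: "exp (-1::real) \<le> 1/2"
proof -
  have "2 \<le> exp (1::real)" using exp_ge_add_one_self[of 1] by simp
  then show ?thesis by (simp add: exp_minus field_simps)
qed

lemma exp_m2_le: "exp (-2::real) \<le> 1/4"
proof -
  have "2 \<le> exp (1::real)" using exp_ge_add_one_self[of 1] by simp
  then have "2 * 2 \<le> exp (1::real) * exp 1" by (intro mult_mono) auto
  then have "4 \<le> exp (2::real)" by (simp add: exp_add[symmetric])
  then show ?thesis by (simp add: exp_minus field_simps)
qed

lemma poisson_window:
  assumes "alpha > 0" "t \<ge> 0" "real K \<le> alpha*t/4" "alpha*t \<ge> 8"
    "real N \<ge> (exp 1 + 1) * (alpha*t) + 2"
  shows "(\<Sum>n\<in>{K..N}. poisson_prob alpha t n) \<ge> 1/2"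
proof -
  define y where "y = alpha*t"
  define A where "A = exp (real K - y + y * exp (-1))"
  define C where "C = exp (- real N - y + y * exp 1)"
  define S where "S = (\<Sum>n\<in>{K..N}. poisson_prob alpha t n)"
  have sA: "(\<lambda>n. poisson_prob alpha t n * exp (real K + (-1) * real n)) sums A"
    using poisson_weighted_sums[of alpha t "real K" "-1"] by (simp add: A_def y_def)
  have sC: "(\<lambda>n. poisson_prob alpha t n * exp (- real N + 1 * real n)) sums C"
    using poisson_weighted_sums[of alpha t "- real N" 1] by (simp add: C_def y_def)
  have sS: "(\<lambda>n. if n \<in> {K..N} then poisson_prob alpha t n else 0) sums S"
    unfolding S_def by (rule sums_If_finite_set) simp
  have tot: "(\<lambda>n. poisson_prob alpha t n * exp (real K + (-1) * real n) + (if n \<in> {K..N} then poisson_prob alpha t n else 0)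
      + poisson_prob alpha t n * exp (- real N + 1 * real n)) sums (A + S + C)"
    by (intro sums_add sA sS sC)
  have "1 \<le> A + S + C"
  proof (rule sums_le[OF _ poisson_sums tot])
    fix n
    have p0: "poisson_prob alpha t n \<ge> 0" using assms by (simp add: poisson_nonneg)
    have e1: "poisson_prob alpha t n * exp (real K + (-1) * real n) \<ge> 0"
         "poisson_prob alpha t n * exp (- real N + 1 * real n) \<ge> 0" using p0 by auto
    show "poisson_prob alpha t n \<le> poisson_prob alpha t n * exp (real K + (-1) * real n) + (if n \<in> {K..N} then poisson_prob alpha t n else 0)
      + poisson_prob alpha t n * exp (- real N + 1 * real n)"
    proof (cases "n < K")
      case True
      then have "1 \<le> exp (real K + (-1) * real n)" by simp
      then have "poisson_prob alpha t n * 1 \<le> poisson_prob alpha t n * exp (real K + (-1) * real n)"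
        using p0 by (intro mult_left_mono) auto
      moreover have "(if n \<in> {K..N} then poisson_prob alpha t n else 0) = 0" using True by simp
      ultimately show ?thesis using e1 p0 by linarith
    next
      case False
      show ?thesis
      proof (cases "n > N")
        case True
        then have "1 \<le> exp (- real N + 1 * real n)" by simp
        then have "poisson_prob alpha t n * 1 \<le> poisson_prob alpha t n * exp (- real N + 1 * real n)"
          using p0 by (intro mult_left_mono) auto
        moreover have "(if n \<in> {K..N} then poisson_prob alpha t n else 0) = 0" using True by simp
        ultimately show ?thesis using e1 p0 by linarith
      next
        case False
        then show ?thesis using \<open>\<not> n < K\<close> e1 by auto
      qed
    qed
  qed
  moreover have "A \<le> 1/4"
  proof -
    have "y * exp (-1) \<le> y * (1/2)" using exp_m1_le assms by (intro mult_left_mono) (auto simp: y_def)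
    moreover have "real K \<le> y/4" "y \<ge> 8" using assms by (auto simp: y_def)
    ultimately have "real K - y + y * exp (-1) \<le> -2" by linarith
    then have "A \<le> exp (-2)" unfolding A_def by simp
    then show ?thesis using exp_m2_le by linarith
  qed
  moreover have "C \<le> 1/4"
  proof -
    have "- real N - y + y * exp 1 \<le> -2" using assms by (simp add: y_def algebra_simps)
    then have "C \<le> exp (-2)" unfolding C_def by simp
    then show ?thesis using exp_m2_le by linarith
  qed
  ultimately show ?thesis by (simp add: S_def)
qed

lemma xi_pair_lower:
  assumes "lam > 0" "mu > 0" "alpha > 0" "t \<ge> 0" "k \<ge> 1"
    "real (k+2) \<le> alpha*t/4" "alpha*t \<ge> 8" "real N \<ge> (exp 1 + 1) * (alpha*t) + 2"
  shows "xi_prob lam mu alpha t k + xi_prob lam mu alpha t (Suc k) \<ge> (lam/(lam+mu))^k * (mu/(lam+mu)) / (4 * real N)"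
proof -
  define c where "c = (lam/(lam+mu))^k * (mu/(lam+mu))"
  have c0: "c \<ge> 0" using assms by (simp add: c_def)
  have "(exp 1 + 1) * (alpha*t) \<ge> 0" using assms by (intro mult_nonneg_nonneg) auto
  then have Npos: "real N > 0" using assms by linarith
  have S: "(\<Sum>n\<in>{k+2..N}. poisson_prob alpha t n) \<ge> 1/2"
    by (rule poisson_window) (use assms in auto)
  have sm: "summable (\<lambda>n. poisson_prob alpha t n * (eta_dist lam mu n k + eta_dist lam mu n (Suc k)))"
    using summable_add[OF xi_term_summable[of lam mu alpha t k] xi_term_summable[of lam mu alpha t "Suc k"]] assms
    by (simp add: distrib_left)
  have eq1: "xi_prob lam mu alpha t k + xi_prob lam mu alpha t (Suc k) =
     (\<Sum>n. poisson_prob alpha t n * (eta_dist lam mu n k + eta_dist lam mu n (Suc k)))"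
    unfolding xi_prob_def distrib_left
    by (rule suminf_add) (use assms in \<open>auto intro: xi_term_summable\<close>)
  have le1: "(\<Sum>n\<in>{k+2..N}. poisson_prob alpha t n * (eta_dist lam mu n k + eta_dist lam mu n (Suc k)))
      \<le> (\<Sum>n. poisson_prob alpha t n * (eta_dist lam mu n k + eta_dist lam mu n (Suc k)))"
    by (rule sum_le_suminf[OF sm]) (use assms in \<open>auto intro!: mult_nonneg_nonneg add_nonneg_nonneg poisson_nonneg eta_nonneg\<close>)
  have le2: "(\<Sum>n\<in>{k+2..N}. poisson_prob alpha t n * (eta_dist lam mu n k + eta_dist lam mu n (Suc k)))
      \<ge> (\<Sum>n\<in>{k+2..N}. poisson_prob alpha t n * (c / (2 * real N)))"
  proof (rule sum_mono)
    fix n assume n: "n \<in> {k+2..N}"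
    have "c / (2 * real N) \<le> c / (2 * real n)"
      using n c0 assms by (intro divide_left_mono) auto
    also have "\<dots> \<le> eta_dist lam mu n k + eta_dist lam mu n (Suc k)"
      unfolding c_def using eta_pair_lower[OF assms(1,2,5)] n by auto
    finally show "poisson_prob alpha t n * (c / (2 * real N)) \<le> poisson_prob alpha t n * (eta_dist lam mu n k + eta_dist lam mu n (Suc k))"
      using assms by (intro mult_left_mono poisson_nonneg) auto
  qed
  have eq3: "(\<Sum>n\<in>{k+2..N}. poisson_prob alpha t n * (c / (2 * real N))) = (c / (2 * real N)) * (\<Sum>n\<in>{k+2..N}. poisson_prob alpha t n)"
    by (simp add: sum_distrib_left sum_divide_distrib mult.commute)
  have le4: "(c / (2 * real N)) * (\<Sum>n\<in>{k+2..N}. poisson_prob alpha t n) \<ge> (c / (2 * real N)) * (1/2)"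
    using S c0 Npos by (intro mult_left_mono) auto
  have eq5: "(c / (2 * real N)) * (1/2) = c / (4 * real N)" by simp
  have "c / (4 * real N) \<le> xi_prob lam mu alpha t k + xi_prob lam mu alpha t (Suc k)"
    unfolding eq1 eq5[symmetric] using le4 le2 le1 unfolding eq3 by (meson order_trans)
  then show ?thesis by (simp add: c_def)
qed


lemma lnT_over_phi:
  assumes phipos: "\<forall>T>0. phi T > (0::real)"
    and "\<exists>a. 0 < a \<and> a < 1 \<and> filterlim (\<lambda>T. phi T / T powr a) at_top at_top"
  shows "((\<lambda>T. ln T / phi T) \<longlongrightarrow> 0) at_top"
proof -
  obtain a where a: "0 < a" "filterlim (\<lambda>T. phi T / T powr a) at_top at_top" using assms(2) by blast
  have "((\<lambda>T. inverse (phi T / T powr a)) \<longlongrightarrow> 0) at_top"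
    by (rule tendsto_inverse_0_at_top[OF a(2)])
  then have lim: "((\<lambda>T. (1/a) * inverse (phi T / T powr a)) \<longlongrightarrow> 0) at_top"
    using tendsto_mult_right_zero by blast
  show ?thesis
  proof (rule tendsto_sandwich[OF _ _ tendsto_const lim])
    show "eventually (\<lambda>T. 0 \<le> ln T / phi T) at_top"
      using eventually_ge_at_top[of 1]
    proof eventually_elim
      case (elim T)
      then have "phi T > 0" "ln T \<ge> 0" using phipos by auto
      then show ?case by simp
    qed
    show "eventually (\<lambda>T. ln T / phi T \<le> (1/a) * inverse (phi T / T powr a)) at_top"
      using eventually_ge_at_top[of 1]
    proof eventually_elim
      case (elim T)
      have ph: "phi T > 0" using phipos elim by auto
      have "ln T \<le> T powr a / a" using ln_powr_bound[OF elim a(1)] .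
      then have "ln T / phi T \<le> (T powr a / a) / phi T" using ph by (intro divide_right_mono) auto
      also have "\<dots> = (1/a) * inverse (phi T / T powr a)" by (simp add: field_simps)
      finally show ?case .
    qed
  qed
qed

lemma eln_div_neg_inf: "(y::real) > 0 \<Longrightarrow> eln 0 / ereal y = - \<infinity>"
  by (simp add: eln_def)

lemma upper_r:
  assumes "lam > 0" "mu > 0" "alpha > 0" and phipos: "\<forall>T>0. phi T > 0"
    and philim: "filterlim phi at_top at_top"
    and r: "r > 1" "lam/(lam+mu)*r < 1" and x0: "x0 \<ge> 0"
    and Bx: "\<And>j T. T > 0 \<Longrightarrow> real j / phi T \<in> B \<Longrightarrow> real j \<ge> x0 * phi T"
  shows "Limsup at_top (\<lambda>T. eln (xi_scaled_prob lam mu alpha phi T B) / ereal (phi T)) \<le> ereal (- x0 * ln r)"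
proof -
  obtain M where M: "M > 0" "\<And>n. (\<Sum>j\<le>n. eta_dist lam mu n j * r^j) \<le> M"
    using eta_moment[OF assms(1,2) r] by blast
  define g where "g T = ereal (ln M / phi T - x0 * ln r)" for T
  have ev: "eventually (\<lambda>T. eln (xi_scaled_prob lam mu alpha phi T B) / ereal (phi T) \<le> g T) at_top"
    using eventually_ge_at_top[of 1]
  proof eventually_elim
    case (elim T)
    define P where "P = xi_scaled_prob lam mu alpha phi T B"
    have ph: "phi T > 0" using phipos elim by auto
    have P0: "P \<ge> 0" unfolding P_def using assms elim by (intro scaled_nonneg) auto
    have Pu: "P \<le> r powr (- (x0 * phi T)) * M"
      unfolding P_def using assms elim M r by (intro scaled_upper) auto
    show ?case
    proof (cases "P > 0")
      case True
      have "ln P \<le> ln (r powr (- (x0 * phi T)) * M)" using True Pu by simp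
      also have "\<dots> = - (x0 * phi T) * ln r + ln M" using M r by (simp add: ln_mult)
      finally have "ln P / phi T \<le> (- (x0 * phi T) * ln r + ln M) / phi T" using ph by (intro divide_right_mono) auto
      also have "\<dots> = ln M / phi T - x0 * ln r" using ph by (simp add: field_simps)
      finally show ?thesis using True ph unfolding P_def[symmetric] g_def by (simp add: eln_def)
    next
      case False
      then have "P = 0" using P0 by simp
      then show ?thesis unfolding P_def[symmetric] using eln_div_neg_inf[OF ph] by simp
    qed
  qed
  have "((\<lambda>T. ln M / phi T - x0 * ln r) \<longlongrightarrow> 0 - x0 * ln r) at_top"
    by (intro tendsto_diff tendsto_const tendsto_divide_0[OF tendsto_const] filterlim_at_top_imp_at_infinity[OF philim])
  then have lim: "(g \<longlongrightarrow> ereal (- x0 * ln r)) at_top" unfolding g_def by (simp add: lim_ereal)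
  have "Limsup at_top (\<lambda>T. eln (xi_scaled_prob lam mu alpha phi T B) / ereal (phi T)) \<le> Limsup at_top g"
    by (rule Limsup_mono[OF ev])
  also have "\<dots> = ereal (- x0 * ln r)" by (rule lim_imp_Limsup[OF trivial_limit_at_top_linorder lim])
  finally show ?thesis .
qed

lemma upper_x0:
  assumes "lam > 0" "mu > 0" "alpha > 0" and phipos: "\<forall>T>0. phi T > 0"
    and philim: "filterlim phi at_top at_top" and x0: "x0 \<ge> 0"
    and Bx: "\<And>j T. T > 0 \<Longrightarrow> real j / phi T \<in> B \<Longrightarrow> real j \<ge> x0 * phi T"
  shows "Limsup at_top (\<lambda>T. eln (xi_scaled_prob lam mu alpha phi T B) / ereal (phi T)) \<le> ereal (- x0 * ln ((lam+mu)/lam))"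
proof -
  define R where "R = (lam+mu)/lam"
  define L where "L = Limsup at_top (\<lambda>T. eln (xi_scaled_prob lam mu alpha phi T B) / ereal (phi T))"
  have R1: "R > 1" using assms by (simp add: R_def)
  have "((\<lambda>r. - x0 * ln r) \<longlongrightarrow> - x0 * ln R) (at_left R)"
    using R1 by (intro tendsto_intros) auto
  then have lim: "((\<lambda>r. ereal (- x0 * ln r)) \<longlongrightarrow> ereal (- x0 * ln R)) (at_left R)" by (simp add: lim_ereal)
  have ev: "eventually (\<lambda>r. L \<le> ereal (- x0 * ln r)) (at_left R)"
    using eventually_at_left_real[OF R1]
  proof eventually_elim
    case (elim r)
    have "lam/(lam+mu)*r < lam/(lam+mu)*R" using elim assms by (intro mult_strict_left_mono) auto
    also have "\<dots> = 1" using assms by (simp add: R_def)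
    finally show ?case unfolding L_def using elim
      by (intro upper_r[OF assms(1-3) phipos philim _ _ x0 Bx]) auto
  qed
  have "L \<le> ereal (- x0 * ln R)"
    by (rule tendsto_le[OF trivial_limit_at_left_real lim tendsto_const ev])
  then show ?thesis by (simp add: L_def R_def)
qed


lemma lower_x:
  assumes lam: "lam > 0" and mu: "mu > 0" and al: "alpha > 0" and phipos: "\<forall>T>0. phi T > 0"
    and philim: "filterlim phi at_top at_top"
    and phiT: "((\<lambda>T. phi T / T) \<longlongrightarrow> 0) at_top"
    and lnphi: "((\<lambda>T. ln T / phi T) \<longlongrightarrow> 0) at_top"
    and x: "x > 0" and d: "\<delta> > 0" and B: "{x-\<delta><..<x+\<delta>} \<subseteq> B"
  shows "Liminf at_top (\<lambda>T. eln (xi_scaled_prob lam mu alpha phi T B) / ereal (phi T)) \<ge> ereal (- x * ln ((lam+mu)/lam))"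
proof -
  define p where "p = lam/(lam+mu)"
  define q where "q = mu/(lam+mu)"
  define D where "D = (exp 1 + 1) * alpha + 3"
  define C0 where "C0 = ln p + ln q - ln (4 * D)"
  define g where "g T = ereal (x * ln p + (C0 / phi T - ln T / phi T))" for T
  have p01: "0 < p" "p < 1" and q0: "q > 0" using assms by (auto simp: p_def q_def)
  have lnp: "ln p < 0" using p01 by simp
  have D0: "D > 0" using al by (simp add: D_def add_pos_pos)
  have e3: "eventually (\<lambda>T. phi T / T < alpha / (8*x)) at_top"
    using order_tendstoD(2)[OF phiT, of "alpha/(8*x)"] al x by simp
  have e4: "eventually (\<lambda>T. phi T > 2/\<delta>) at_top"
    using philim by (simp add: filterlim_at_top_dense)
  have ev: "eventually (\<lambda>T. g T \<le> eln (xi_scaled_prob lam mu alpha phi T B) / ereal (phi T)) at_top"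
    using eventually_ge_at_top[of "max 1 (24/alpha)"] e3 e4
  proof eventually_elim
    case (elim T)
    have T1: "T \<ge> 1" and T24: "alpha * T \<ge> 24" using elim al by (auto simp: field_simps)
    have ph: "phi T > 0" using phipos T1 by auto
    define k where "k = nat \<lceil>x * phi T\<rceil>"
    have ypos: "x * phi T > 0" using x ph by simp
    have yk: "real k = real_of_int \<lceil>x * phi T\<rceil>" using ypos by (simp add: k_def)
    have k1: "real k \<ge> x * phi T" "real k < x * phi T + 1"
      using yk ceiling_correct[of "x * phi T"] by linarith+
    have kge: "k \<ge> 1" using ypos k1 by (cases k) auto
    have "phi T < alpha / (8*x) * T" using elim(2) T1 by (simp add: divide_less_eq)
    then have "x * phi T < alpha * T / 8" using x by (simp add: field_simps)
    then have kK: "real (k+2) \<le> alpha*T/4" using k1 T24 by simp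
    define N where "N = nat \<lceil>(exp 1 + 1) * (alpha*T)\<rceil> + 2"
    have N1: "real N \<ge> (exp 1 + 1) * (alpha*T) + 2" unfolding N_def by linarith
    have "(exp 1 + 1) * (alpha*T) \<ge> 0" using al T1 by (intro mult_nonneg_nonneg) auto
    then have N2: "real N \<le> (exp 1 + 1) * (alpha*T) + 3" unfolding N_def by linarith
    also have "\<dots> \<le> D * T" using T1 by (simp add: D_def algebra_simps)
    finally have NDT: "real N \<le> D * T" .
    have Npos: "real N > 0" using N1 \<open>(exp 1 + 1) * (alpha*T) \<ge> 0\<close> by linarith
    have dphi: "1 / phi T < \<delta> / 2" using elim(3) ph d by (simp add: field_simps)
    have inB1: "real k / phi T \<in> B"
    proof -
      have "x \<le> real k / phi T" using k1 ph by (simp add: field_simps)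
      moreover have "real k / phi T < (x * phi T + 1) / phi T" using k1 ph by (intro divide_strict_right_mono) auto
      moreover have "(x * phi T + 1) / phi T = x + 1 / phi T" using ph by (simp add: field_simps)
      moreover have "2 / phi T = 2 * (1 / phi T)" by simp
      ultimately have "real k / phi T \<in> {x-\<delta><..<x+\<delta>}" using d dphi by auto
      then show ?thesis using B by blast
    qed
    have inB2: "real (Suc k) / phi T \<in> B"
    proof -
      have "x \<le> real (Suc k) / phi T" using k1 ph by (simp add: field_simps)
      moreover have "real (Suc k) / phi T < (x * phi T + 2) / phi T" using k1 ph by (intro divide_strict_right_mono) auto
      moreover have "(x * phi T + 2) / phi T = x + 2 / phi T" using ph by (simp add: field_simps)
      moreover have "2 / phi T = 2 * (1 / phi T)" by simp
      ultimately have "real (Suc k) / phi T \<in> {x-\<delta><..<x+\<delta>}" using d dphi by (simp only: greaterThanLessThan_iff) linarith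
      then show ?thesis using B by blast
    qed
    define P where "P = xi_scaled_prob lam mu alpha phi T B"
    have "P \<ge> xi_prob lam mu alpha T k + xi_prob lam mu alpha T (Suc k)"
      unfolding P_def using assms T1 inB1 inB2 by (intro scaled_lower) auto
    moreover have "xi_prob lam mu alpha T k + xi_prob lam mu alpha T (Suc k) \<ge> p^k * q / (4 * real N)"
      unfolding p_def q_def using assms T1 kge kK T24 N1 by (intro xi_pair_lower) auto
    ultimately have Pl: "P \<ge> p^k * q / (4 * real N)" by linarith
    have pos: "p^k * q / (4 * real N) > 0" using p01 q0 Npos by simp
    then have Ppos: "P > 0" using Pl by linarith
    have "ln (p^k * q / (4 * real N)) = real k * ln p + ln q - ln (4 * real N)"
      using p01 q0 Npos by (simp add: ln_mult ln_div ln_realpow)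
    also have "real k * ln p \<ge> (x * phi T + 1) * ln p"
      using k1 lnp by (intro mult_right_mono_neg) auto
    then have "real k * ln p + ln q - ln (4 * real N) \<ge> (x * phi T + 1) * ln p + ln q - ln (4 * real N)" by linarith
    moreover have "ln (4 * real N) \<le> ln (4 * D) + ln T"
    proof -
      have "ln (4 * real N) \<le> ln (4 * (D * T))" using Npos NDT by simp
      also have "\<dots> = ln (4 * D) + ln T" using D0 T1 by (simp add: ln_mult)
      finally show ?thesis .
    qed
    ultimately have "ln (p^k * q / (4 * real N)) \<ge> x * phi T * ln p + C0 - ln T"
      unfolding C0_def by (simp add: algebra_simps)
    moreover have "ln P \<ge> ln (p^k * q / (4 * real N))" using Pl pos by simp
    ultimately have "ln P \<ge> x * phi T * ln p + C0 - ln T" by linarith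
    then have "(x * phi T * ln p + C0 - ln T) / phi T \<le> ln P / phi T" using ph by (intro divide_right_mono) auto
    moreover have "(x * phi T * ln p + C0 - ln T) / phi T = x * ln p + (C0 / phi T - ln T / phi T)"
      using ph by (simp add: field_simps)
    ultimately show ?case using Ppos ph unfolding P_def[symmetric] g_def by (simp add: eln_def)
  qed
  have "((\<lambda>T. x * ln p + (C0 / phi T - ln T / phi T)) \<longlongrightarrow> x * ln p + (0 - 0)) at_top"
    by (intro tendsto_add tendsto_diff tendsto_const lnphi tendsto_divide_0[OF tendsto_const]
        filterlim_at_top_imp_at_infinity[OF philim])
  then have lim: "(g \<longlongrightarrow> ereal (x * ln p)) at_top" unfolding g_def by (simp add: lim_ereal)
  have "ereal (x * ln p) = Liminf at_top g" by (rule lim_imp_Liminf[OF trivial_limit_at_top_linorder lim, symmetric])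
  also have "\<dots> \<le> Liminf at_top (\<lambda>T. eln (xi_scaled_prob lam mu alpha phi T B) / ereal (phi T))"
    by (rule Liminf_mono[OF ev])
  moreover have "x * ln p = - x * ln ((lam+mu)/lam)" using lam mu by (simp add: p_def ln_div algebra_simps)
  ultimately show ?thesis by simp
qed


theorem theorem2p3:
  fixes lam mu alpha :: real and phi :: "real \<Rightarrow> real"
  assumes "lam > 0" and "mu > 0" and "alpha > 0"
    and "\<forall>T>0. phi T > 0"
    and "filterlim phi at_top at_top"
    and "((\<lambda>T. phi T / T) \<longlongrightarrow> 0) at_top"
    and "\<exists>a. 0 < a \<and> a < 1 \<and> filterlim (\<lambda>T. phi T / T powr a) at_top at_top"
  shows "LDP (xi_scaled_prob lam mu alpha phi) (I1 lam mu) phi"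
proof -
  note lam = assms(1) and mu = assms(2) and al = assms(3) and phipos = assms(4)
    and philim = assms(5) and phiT = assms(6)
  have lnphi: "((\<lambda>T. ln T / phi T) \<longlongrightarrow> 0) at_top" by (rule lnT_over_phi[OF phipos assms(7)])
  define c0 where "c0 = ln ((lam+mu)/lam)"
  have c0: "c0 > 0" using lam mu by (simp add: c0_def)
  have Idef: "I1 lam mu x = (if x < 0 then \<infinity> else ereal (x * c0))" for x
    by (simp add: I1_def c0_def)
  define F where "F B T = eln (xi_scaled_prob lam mu alpha phi T B) / ereal (phi T)" for B T
  have part1: "\<forall>x. I1 lam mu x \<ge> 0"
    using c0 by (auto simp: Idef)
  have part2: "compact {x. I1 lam mu x \<le> ereal c}" if "c \<ge> 0" for c :: real
  proof -
    have "{x. I1 lam mu x \<le> ereal c} = {0..c/c0}"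
      using c0 by (auto simp: Idef field_simps)
    then show ?thesis by simp
  qed
  have upper: "Limsup at_top (F B) \<le> - rate_set (I1 lam mu) (closure B)" for B
  proof (cases "closure B \<inter> {0..} = {}")
    case True
    have "eventually (\<lambda>T. F B T \<le> - \<infinity>) at_top"
      using eventually_gt_at_top[of 0]
    proof eventually_elim
      case (elim T)
      have ph: "phi T > 0" using phipos elim by auto
      have "\<And>j. real j / phi T \<notin> B"
      proof
        fix j assume "real j / phi T \<in> B"
        then have "real j / phi T \<in> closure B \<inter> {0..}" using ph closure_subset by auto
        then show False using True by auto
      qed
      then have "xi_scaled_prob lam mu alpha phi T B = 0" by (rule scaled_empty)
      then show ?case unfolding F_def using eln_div_neg_inf[OF ph] by simp
    qed
    then have "Limsup at_top (F B) \<le> - \<infinity>" by (rule Limsup_bounded)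
    then show ?thesis by simp
  next
    case False
    define S where "S = closure B \<inter> {0..}"
    have Sne: "S \<noteq> {}" using False by (simp add: S_def)
    have Sbdd: "bdd_below S" unfolding S_def by (rule bdd_belowI[of _ 0]) auto
    have Scl: "closed S" unfolding S_def by (intro closed_Int) auto
    define x0 where "x0 = Inf S"
    have x0S: "x0 \<in> S" unfolding x0_def by (rule closed_contains_Inf[OF Sne Sbdd Scl])
    then have x00: "x0 \<ge> 0" by (simp add: S_def)
    have x0le: "x0 \<le> y" if "y \<in> S" for y unfolding x0_def by (rule cInf_lower[OF that Sbdd])
    have Bx: "real j \<ge> x0 * phi T" if "T > 0" "real j / phi T \<in> B" for j T
    proof -
      have ph: "phi T > 0" using phipos that by auto
      have "real j / phi T \<in> S" using that ph closure_subset by (auto simp: S_def)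
      then have "x0 \<le> real j / phi T" by (rule x0le)
      then show ?thesis using ph by (simp add: field_simps)
    qed
    have "Limsup at_top (F B) \<le> ereal (- x0 * c0)"
      unfolding F_def c0_def using upper_x0[OF lam mu al phipos philim x00 Bx] by simp
    moreover have "rate_set (I1 lam mu) (closure B) \<le> ereal (x0 * c0)"
    proof -
      have "rate_set (I1 lam mu) (closure B) \<le> I1 lam mu x0"
        unfolding rate_set_def using x0S by (intro INF_lower) (auto simp: S_def)
      then show ?thesis using x00 by (simp add: Idef)
    qed
    then have "ereal (- x0 * c0) \<le> - rate_set (I1 lam mu) (closure B)"
      by (metis ereal_minus_le_minus uminus_ereal.simps(1) mult_minus_left)
    ultimately show ?thesis by (rule order_trans)
  qed
  have lower: "Liminf at_top (F B) \<ge> - rate_set (I1 lam mu) (interior B)" for B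
  proof -
    define L where "L = Liminf at_top (F B)"
    have pos: "L \<ge> ereal (- y * c0)" if yy: "y > 0" "y \<in> interior B" for y
    proof -
      obtain e where e: "e > 0" "ball y e \<subseteq> interior B"
        using yy open_contains_ball[of "interior B"] by auto
      have "{y-e<..<y+e} \<subseteq> ball y e" by (auto simp: dist_real_def ball_def)
      then have "{y-e<..<y+e} \<subseteq> B" using e interior_subset[of B] by blast
      then show ?thesis unfolding L_def F_def c0_def
        by (intro lower_x[OF lam mu al phipos philim phiT lnphi yy(1) e(1)])
    qed
    have "- I1 lam mu y \<le> L" if yB: "y \<in> interior B" for y
    proof (cases "y < 0")
      case True
      then show ?thesis by (simp add: Idef)
    next
      case False
      show ?thesis
      proof (cases "y = 0")
        case False
        then show ?thesis using pos[of y] yB \<open>\<not> y < 0\<close> by (simp add: Idef)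
      next
        case True
        obtain e where e: "e > 0" "ball 0 e \<subseteq> interior B"
          using yB True open_contains_ball[of "interior B"] by auto
        have ev: "eventually (\<lambda>z. ereal (- z * c0) \<le> L) (at_right 0)"
          using eventually_at_right_real[OF half_gt_zero[OF e(1)]]
        proof eventually_elim
          case (elim z)
          have "{z - e/2<..<z + e/2} \<subseteq> ball 0 e" using elim by (auto simp: dist_real_def ball_def)
          then have "{z - e/2<..<z + e/2} \<subseteq> B" using e interior_subset[of B] by blast
          then show ?case unfolding L_def F_def c0_def using elim
            by (intro lower_x[OF lam mu al phipos philim phiT lnphi]) auto
        qed
        have "((\<lambda>z. - z * c0) \<longlongrightarrow> - 0 * c0) (at_right 0)" by (intro tendsto_intros)
        then have lim: "((\<lambda>z. ereal (- z * c0)) \<longlongrightarrow> ereal 0) (at_right 0)" by (simp add: lim_ereal)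
        have "ereal 0 \<le> L" by (rule tendsto_le[OF trivial_limit_at_right_real tendsto_const lim ev])
        then show ?thesis using True by (simp add: Idef)
      qed
    qed
    then have "- L \<le> rate_set (I1 lam mu) (interior B)"
      unfolding rate_set_def by (intro INF_greatest) (simp add: ereal_uminus_le_reorder)
    then show ?thesis unfolding L_def by (simp add: ereal_uminus_le_reorder)
  qed
  show ?thesis unfolding LDP_def
    using part1 part2 upper lower unfolding F_def by blast
qed

end
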